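(* Let $\Omega_1,\Omega_2$ be finite sets and $(\Omega_1^k\times\Omega_2^k,\mu)$ a probability space such that the marginal of $\mu$ on any pair of coordinates, one from the $\Omega_1^k$ part and one from the $\Omega_2^k$ part, is a product distribution. Let $\mu_1,\mu_2$ be the marginals of $\mu$ on $\Omega_1^k$ and $\Omega_2^k$. Let $X,Y$ be random $k\times L$ matrices (entries in $\Omega_1$, resp. $\Omega_2$) chosen so that independently for each $i\in[L]$ the pair of $i$-th columns $(x^i,y^i)\in\Omega_1^k\times\Omega_2^k$ is drawn from $\mu$; let $x_j\in\Omega_1^L$, $y_j\in\Omega_2^L$ denote the $j$-th rows. Let $F:\Omega_1^L\to[-1,1]$ and $G:\Omega_2^L\to[-1,1]$ and set $$\tau:=\sqrt{\sum_{i\in[L]}\mathrm{Inf}_i[F]\,\mathrm{Inf}_i[G]},\qquad \Gamma:=\max\Big\{\sqrt{\textstyle\sum_{i\in[L]}\mathrm{Inf}_i[F]},\ \sqrt{\textstyle\sum_{i\in[L]}\mathrm{Inf}_i[G]}\Big\}.$$ Then $$\Big|\mathbb{E}_{(X,Y)\sim\mu^{\otimes L}}\Big[\prod_{j\in[k]}F(x_j)G(y_j)\Big]-\mathbb{E}_{X\sim\mu_1^{\otimes L}}\Big[\prod_{j\in[k]}F(x_j)\Big]\,\mathbb{E}_{Y\sim\mu_2^{\otimes L}}\Big[\prod_{j\in[k]}G(y_j)\Big]\Big|\le 2^{O(k)}\,\Gamma\,\tau,$$ where the $O(\cdot)$ hides an absolute constant.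
   Context: Influences of $F:\Omega_1^L\to\mathbb{R}$ are taken with respect to the product measure on $\Omega_1^L$ whose coordinate marginals are the single-coordinate marginals of $\mu_1$ (and similarly for $G$ with $\mu_2$): $\mathrm{Inf}_i[F]:=\mathbb{E}_{x_{-i}}\mathrm{Var}_{x_i}[F(x_1,\dots,x_L)]$, equivalently $\sum_{\beta\ni i}\|F_\beta\|_2^2$ for the Efron–Stein decomposition $F=\sum_{\beta\subseteq[L]}F_\beta$. In $X\sim\mu_1^{\otimes L}$ the columns of $X$ are independent samples from $\mu_1$ (and similarly for $Y$). *)

theory Defs
  imports "HOL-Probability.Probability"
begin

definition prod_pmf :: "nat \<Rightarrow> 'a pmf \<Rightarrow> (nat \<Rightarrow> 'a) pmf" where
  "prod_pmf L \<nu> = Pi_pmf {..<L} undefined (\<lambda>_. \<nu>)"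

definition influence :: "'a pmf \<Rightarrow> nat \<Rightarrow> ((nat \<Rightarrow> 'a) \<Rightarrow> real) \<Rightarrow> nat \<Rightarrow> real" where
  "influence \<nu> L F i =
     measure_pmf.expectation (prod_pmf L \<nu>)
       (\<lambda>x. measure_pmf.variance \<nu> (\<lambda>a. F (x(i := a))))"

(* j-th row of a k x L matrix given by its columns Z 0, ..., Z (L-1) *)
definition row :: "nat \<Rightarrow> (nat \<Rightarrow> (nat \<Rightarrow> 'a)) \<Rightarrow> nat \<Rightarrow> (nat \<Rightarrow> 'a)" where
  "row L Z j = restrict (\<lambda>i. Z i j) {..<L}"

end

theory Submission
  imports Defs
begin

lemma pmf_int_bdd:
  fixes f :: "'a \<Rightarrow> real"
  assumes "\<And>x. \<bar>f x\<bar> \<le> B"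
  shows "integrable (measure_pmf p) f"
  by (rule measure_pmf.integrable_const_bound[where B=B]) (use assms in auto)

lemma pmf_exp_bdd:
  fixes f :: "'a \<Rightarrow> real"
  assumes "\<And>x. \<bar>f x\<bar> \<le> B"
  shows "\<bar>measure_pmf.expectation p f\<bar> \<le> B"
proof -
  have B0: "0 \<le> B" using assms[of undefined] by linarith
  have "\<bar>measure_pmf.expectation p f\<bar> \<le> measure_pmf.expectation p (\<lambda>x. \<bar>f x\<bar>)"
    by (rule integral_abs_bound)
  also have "\<dots> \<le> measure_pmf.expectation p (\<lambda>x. B)"
    by (intro integral_mono pmf_int_bdd[where B=B]) (use assms B0 in auto)
  also have "\<dots> = B" using assms[of undefined] by simp
  finally show ?thesis .
qed

lemma pmf_int_bind:
  fixes f :: "'a \<Rightarrow> real"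
  assumes "\<And>x. \<bar>f x\<bar> \<le> B"
  shows "measure_pmf.expectation (bind_pmf M N) f = measure_pmf.expectation M (\<lambda>x. measure_pmf.expectation (N x) f)"
  unfolding measure_pmf_bind
  by (rule integral_bind[where K="count_space UNIV" and B=B and B'=1])
     (use assms measurable_measure_pmf[of N] in \<open>auto simp: measure_pmf.emeasure_space_1 prob_space_measure_pmf\<close>)

lemma pmf_int_pair:
  fixes f :: "'a \<times> 'b \<Rightarrow> real"
  assumes "\<And>x. \<bar>f x\<bar> \<le> B"
  shows "measure_pmf.expectation (pair_pmf M N) f = measure_pmf.expectation M (\<lambda>a. measure_pmf.expectation N (\<lambda>b. f (a,b)))"
  unfolding pair_pmf_def
  apply (subst pmf_int_bind[of _ B], fact)
  apply (subst pmf_int_bind[of _ B], fact)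
  apply simp
  done

lemma pmf_int_pair_prod:
  fixes f :: "'a \<Rightarrow> real" and g :: "'b \<Rightarrow> real"
  assumes "\<And>x. \<bar>f x\<bar> \<le> B" "\<And>x. \<bar>g x\<bar> \<le> B'"
  shows "measure_pmf.expectation (pair_pmf M N) (\<lambda>(a,b). f a * g b) = measure_pmf.expectation M f * measure_pmf.expectation N g"
proof -
  have "\<bar>(\<lambda>(a,b). f a * g b) x\<bar> \<le> B * B'" for x
    using assms by (auto simp: abs_mult split: prod.splits intro!: mult_mono' order_trans[OF abs_ge_zero assms(1)]) 
  then show ?thesis
    by (subst pmf_int_pair[of _ "B*B'"]) auto
qed

lemma Pi_resample:
  assumes "finite A" "t \<in> A"
  shows "Pi_pmf A d (p(t:=q)) = bind_pmf (Pi_pmf A d p) (\<lambda>Z. map_pmf (\<lambda>c. Z(t:=c)) q)"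
proof -
  define A' where "A' = A - {t}"
  have A: "A = insert t A'" "t \<notin> A'" "finite A'" using assms by (auto simp: A'_def)
  have c: "Pi_pmf A' d (p(t:=q)) = Pi_pmf A' d p"
    by (rule Pi_pmf_cong) (use A in auto)
  have "Pi_pmf A d (p(t:=q)) = map_pmf (\<lambda>(y,f). f(t:=y)) (pair_pmf q (Pi_pmf A' d p))"
    unfolding A(1) using A by (subst Pi_pmf_insert) (auto simp: c)
  also have "\<dots> = bind_pmf (Pi_pmf A' d p) (\<lambda>f. map_pmf (\<lambda>c. f(t:=c)) q)"
    unfolding map_pmf_def pair_pmf_def
    by (subst bind_commute_pmf) (simp add: bind_assoc_pmf bind_return_pmf)
  also have "\<dots> = bind_pmf (Pi_pmf A d p) (\<lambda>Z. map_pmf (\<lambda>c. Z(t:=c)) q)"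
    unfolding A(1) using A
    by (subst Pi_pmf_insert) (auto simp: map_pmf_def pair_pmf_def bind_assoc_pmf bind_return_pmf bind_pmf_const)
  finally show ?thesis .
qed

lemma Pi_pair:
  assumes "finite A"
  shows "Pi_pmf A d (\<lambda>i. pair_pmf (p i) (q i)) =
    map_pmf (\<lambda>(u,v) i. if i \<in> A then (u i, v i) else d) (pair_pmf (Pi_pmf A undefined p) (Pi_pmf A undefined q))"
proof -
  have "Pi_pmf A d (\<lambda>i. pair_pmf (p i) (q i)) =
        Pi_pmf A d (\<lambda>i. bind_pmf (p i) (\<lambda>a. bind_pmf (q i) (\<lambda>b. return_pmf (a, b))))"
    by (simp add: pair_pmf_def)
  also have "\<dots> = bind_pmf (Pi_pmf A undefined p) (\<lambda>u. Pi_pmf A d (\<lambda>i. bind_pmf (q i) (\<lambda>b. return_pmf (u i, b))))"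
    by (rule Pi_pmf_bind[OF assms])
  also have "\<dots> = bind_pmf (Pi_pmf A undefined p) (\<lambda>u. bind_pmf (Pi_pmf A undefined q) (\<lambda>v. Pi_pmf A d (\<lambda>i. return_pmf (u i, v i))))"
    by (subst Pi_pmf_bind[OF assms]) rule
  also have "\<dots> = map_pmf (\<lambda>(u,v) i. if i \<in> A then (u i, v i) else d) (pair_pmf (Pi_pmf A undefined p) (Pi_pmf A undefined q))"
    using assms by (simp add: map_pmf_def pair_pmf_def bind_assoc_pmf bind_return_pmf)
  finally show ?thesis .
qed

lemma Pi_rows:
  assumes "\<And>i. i < L \<Longrightarrow> map_pmf (\<lambda>c. (fst c j1, snd c j2)) (p i) = pair_pmf \<nu>1 \<nu>2"
  shows "map_pmf (\<lambda>Z. (row L (\<lambda>i. fst (Z i)) j1, row L (\<lambda>i. snd (Z i)) j2)) (Pi_pmf {..<L} d p)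
         = pair_pmf (prod_pmf L \<nu>1) (prod_pmf L \<nu>2)"
proof -
  define h where "h = (\<lambda>c::(nat \<Rightarrow> 'a) \<times> (nat \<Rightarrow> 'b). (fst c j1, snd c j2))"
  have "map_pmf (\<lambda>Z. h \<circ> Z) (Pi_pmf {..<L} d p) = Pi_pmf {..<L} (h d) (\<lambda>i. map_pmf h (p i))"
    by (rule Pi_pmf_map[symmetric]) auto
  also have "\<dots> = Pi_pmf {..<L} (h d) (\<lambda>i. pair_pmf \<nu>1 \<nu>2)"
    by (rule Pi_pmf_cong) (use assms in \<open>auto simp: h_def\<close>)
  also have "\<dots> = map_pmf (\<lambda>(u,v) i. if i \<in> {..<L} then (u i, v i) else h d) (pair_pmf (prod_pmf L \<nu>1) (prod_pmf L \<nu>2))"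
    unfolding prod_pmf_def by (rule Pi_pair) auto
  finally have eq: "map_pmf (\<lambda>Z. h \<circ> Z) (Pi_pmf {..<L} d p) = \<dots>" .
  have "map_pmf (\<lambda>Z. (row L (\<lambda>i. fst (Z i)) j1, row L (\<lambda>i. snd (Z i)) j2)) (Pi_pmf {..<L} d p)
      = map_pmf (\<lambda>W. (restrict (\<lambda>i. fst (W i)) {..<L}, restrict (\<lambda>i. snd (W i)) {..<L})) (map_pmf (\<lambda>Z. h \<circ> Z) (Pi_pmf {..<L} d p))"
    by (simp add: pmf.map_comp o_def h_def row_def)
  also have "\<dots> = map_pmf (\<lambda>x. x) (pair_pmf (prod_pmf L \<nu>1) (prod_pmf L \<nu>2))"
    unfolding eq pmf.map_comp
  proof (rule map_pmf_cong[OF refl])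
    fix x assume "x \<in> set_pmf (pair_pmf (prod_pmf L \<nu>1) (prod_pmf L \<nu>2))"
    then obtain u v where x: "x = (u,v)" "u \<in> set_pmf (prod_pmf L \<nu>1)" "v \<in> set_pmf (prod_pmf L \<nu>2)"
      by (cases x) auto
    have "\<forall>i. i \<notin> {..<L} \<longrightarrow> u i = undefined" "\<forall>i. i \<notin> {..<L} \<longrightarrow> v i = undefined"
      using x set_Pi_pmf_subset[of "{..<L}" undefined] unfolding prod_pmf_def by blast+
    then show "((\<lambda>W. (restrict (\<lambda>i. fst (W i)) {..<L}, restrict (\<lambda>i. snd (W i)) {..<L})) \<circ>
         (\<lambda>(u, v) i. if i \<in> {..<L} then (u i, v i) else h d)) x = x"
      using x by (auto simp: fun_eq_iff restrict_def)
  qed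
  finally show ?thesis by simp
qed

lemma prod_abs_le1:
  fixes mm :: "nat \<Rightarrow> real"
  assumes "\<forall>j<k. \<bar>mm j\<bar> \<le> 1" and that: "S \<subseteq> {..<k}"
  shows "\<bar>\<Prod>j\<in>S. mm j\<bar> \<le> 1"
proof -
  have "\<bar>\<Prod>j\<in>S. mm j\<bar> = (\<Prod>j\<in>S. \<bar>mm j\<bar>)" by (simp add: abs_prod)
  also have "\<dots> \<le> 1" by (rule prod_le_1) (use assms that in auto)
  finally show ?thesis .
qed

lemma prod_expand:
  fixes u mm :: "nat \<Rightarrow> real"
  assumes "\<forall>j<k. \<bar>u j\<bar> \<le> 1" "\<forall>j<k. \<bar>mm j\<bar> \<le> 1"
  shows "\<bar>(\<Prod>j<k. u j) - (\<Prod>j<k. mm j)\<bar> \<le> (\<Sum>j<k. \<bar>u j - mm j\<bar>)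
    \<and> \<bar>\<Sum>i<k. (u i - mm i) * (\<Prod>l\<in>{..<k}-{i}. mm l)\<bar> \<le> (\<Sum>j<k. \<bar>u j - mm j\<bar>)
    \<and> \<bar>(\<Prod>j<k. u j) - (\<Prod>j<k. mm j) - (\<Sum>i<k. (u i - mm i) * (\<Prod>l\<in>{..<k}-{i}. mm l))\<bar> \<le> (\<Sum>j<k. \<bar>u j - mm j\<bar>)^2"
  using assms
proof (induction k)
  case 0
  then show ?case by simp
next
  case (Suc k)
  define P where "P = (\<Prod>j<k. u j)"
  define P0 where "P0 = (\<Prod>j<k. mm j)"
  define P1 where "P1 = (\<Sum>i<k. (u i - mm i) * (\<Prod>l\<in>{..<k}-{i}. mm l))"
  define A where "A = (\<Sum>j<k. \<bar>u j - mm j\<bar>)"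
  have IH: "\<bar>P - P0\<bar> \<le> A" "\<bar>P1\<bar> \<le> A" "\<bar>P - P0 - P1\<bar> \<le> A^2"
    using Suc unfolding P_def P0_def P1_def A_def by auto
  have A0: "0 \<le> A" unfolding A_def by (auto intro: sum_nonneg)
  have uk: "\<bar>u k\<bar> \<le> 1" and mk: "\<bar>mm k\<bar> \<le> 1" using Suc.prems by auto
  have P0b: "\<bar>P0\<bar> \<le> 1" unfolding P0_def by (rule prod_abs_le1[of k]) (use Suc.prems in auto)
  have set1: "{..<Suc k} - {i} = insert k ({..<k} - {i})" if "i < k" for i using that by auto
  have set2: "{..<Suc k} - {k} = {..<k}" by auto
  have P1': "(\<Sum>i<Suc k. (u i - mm i) * (\<Prod>l\<in>{..<Suc k}-{i}. mm l)) = P1 * mm k + (u k - mm k) * P0"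
  proof -
    have "(\<Sum>i<k. (u i - mm i) * (\<Prod>l\<in>{..<Suc k}-{i}. mm l)) = (\<Sum>i<k. (u i - mm i) * (\<Prod>l\<in>{..<k}-{i}. mm l) * mm k)"
      by (intro sum.cong refl) (simp add: set1 mult.commute mult.left_commute)
    also have "\<dots> = P1 * mm k" unfolding P1_def by (simp add: sum_distrib_right)
    finally show ?thesis by (simp add: set2 P0_def)
  qed
  have Pk: "(\<Prod>j<Suc k. u j) = P * u k" "(\<Prod>j<Suc k. mm j) = P0 * mm k" "(\<Sum>j<Suc k. \<bar>u j - mm j\<bar>) = A + \<bar>u k - mm k\<bar>"
    by (simp_all add: P_def P0_def A_def)
  define d where "d = u k - mm k"
  have e1: "P * u k - P0 * mm k = (P - P0) * u k + P0 * d" by (simp add: d_def algebra_simps)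
  have e3: "P * u k - P0 * mm k - (P1 * mm k + d * P0) = (P - P0 - P1) * u k + P1 * d" by (simp add: d_def algebra_simps)
  have b1: "\<bar>(P - P0) * u k + P0 * d\<bar> \<le> A + \<bar>d\<bar>"
  proof -
    have "\<bar>(P - P0) * u k\<bar> \<le> A" using IH(1) uk by (simp add: abs_mult) (metis A0 abs_ge_zero mult_mono mult.right_neutral order_trans)
    moreover have "\<bar>P0 * d\<bar> \<le> \<bar>d\<bar>" using P0b by (simp add: abs_mult mult_left_le_one_le)
    ultimately show ?thesis by (smt (verit) abs_triangle_ineq)
  qed
  have b2: "\<bar>P1 * mm k + d * P0\<bar> \<le> A + \<bar>d\<bar>"
  proof -
    have "\<bar>P1 * mm k\<bar> \<le> A" using IH(2) mk by (simp add: abs_mult) (metis A0 abs_ge_zero mult_mono mult.right_neutral order_trans)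
    moreover have "\<bar>d * P0\<bar> \<le> \<bar>d\<bar>" using P0b by (simp add: abs_mult mult_right_le_one_le)
    ultimately show ?thesis by (smt (verit) abs_triangle_ineq)
  qed
  have b3: "\<bar>(P - P0 - P1) * u k + P1 * d\<bar> \<le> (A + \<bar>d\<bar>)^2"
  proof -
    have "\<bar>(P - P0 - P1) * u k\<bar> \<le> A^2" using IH(3) uk
      by (simp add: abs_mult) (metis abs_ge_zero mult_mono mult.right_neutral order_trans zero_le_power2)
    moreover have "\<bar>P1 * d\<bar> \<le> A * \<bar>d\<bar>" using IH(2) by (simp add: abs_mult mult_right_mono)
    moreover have "A^2 + A * \<bar>d\<bar> \<le> (A + \<bar>d\<bar>)^2" using A0 by (simp add: power2_eq_square algebra_simps)
    ultimately show ?thesis by (smt (verit) abs_triangle_ineq)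
  qed
  show ?case
    unfolding Pk P1' using b1 b2 b3 e1 e3 by (simp add: d_def)
qed

lemma amgm_lam:
  fixes x y l :: real
  assumes "l > 0"
  shows "x * y \<le> (l * x^2 + y^2 / l) / 2"
proof -
  have "0 \<le> (l * x - y)^2 / l" using assms by simp
  also have "(l * x - y)^2 / l = l * x^2 - 2 * x * y + y^2 / l"
    using assms by (simp add: power2_eq_square field_simps)
  finally show ?thesis by simp
qed

lemma AB_bound:
  fixes a b :: "nat \<Rightarrow> real" and l :: real
  assumes "l > 0"
  shows "(\<Sum>i<k. \<bar>a i\<bar>) * (\<Sum>r<k. \<bar>b r\<bar>)^2 \<le>
    (l * real k^2 * (\<Sum>i<k. \<Sum>r<k. (a i)^2 * (b r)^2) + real k * (\<Sum>r<k. (b r)^2) / l) / 2"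
proof -
  define A where "A = (\<Sum>i<k. \<bar>a i\<bar>)"
  define B where "B = (\<Sum>r<k. \<bar>b r\<bar>)"
  have A2: "A^2 \<le> real k * (\<Sum>i<k. (a i)^2)"
    using sum_squared_le_sum_of_squares[of "\<lambda>i. \<bar>a i\<bar>" "{..<k}"] unfolding A_def by (simp add: mult.commute)
  have B2: "B^2 \<le> real k * (\<Sum>i<k. (b i)^2)"
    using sum_squared_le_sum_of_squares[of "\<lambda>i. \<bar>b i\<bar>" "{..<k}"] unfolding B_def by (simp add: mult.commute)
  have "(A * B)^2 = A^2 * B^2" by (simp add: power_mult_distrib)
  also have "\<dots> \<le> (real k * (\<Sum>i<k. (a i)^2)) * (real k * (\<Sum>i<k. (b i)^2))"
    by (intro mult_mono A2 B2) (auto intro!: sum_nonneg mult_nonneg_nonneg)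
  also have "\<dots> = real k^2 * (\<Sum>i<k. \<Sum>r<k. (a i)^2 * (b r)^2)"
    by (simp add: power2_eq_square sum_product algebra_simps)
  finally have AB2: "(A * B)^2 \<le> real k^2 * (\<Sum>i<k. \<Sum>r<k. (a i)^2 * (b r)^2)" .
  have "A * B^2 = (A * B) * B" by (simp add: power2_eq_square)
  also have "\<dots> \<le> (l * (A * B)^2 + B^2 / l) / 2" by (rule amgm_lam[OF assms])
  also have "\<dots> \<le> (l * (real k^2 * (\<Sum>i<k. \<Sum>r<k. (a i)^2 * (b r)^2)) + real k * (\<Sum>r<k. (b r)^2) / l) / 2"
    using assms AB2 B2 by (intro divide_right_mono add_mono mult_left_mono) auto
  finally show ?thesis unfolding A_def B_def by (simp add: mult.assoc)
qed

lemma sq_le4: "\<bar>x::real\<bar> \<le> 2 \<Longrightarrow> x^2 \<le> 4"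
  using power_mono[of "\<bar>x\<bar>" 2 2] by simp

locale core_setup =
  fixes k :: nat and \<nu>1 :: "'a pmf" and \<nu>2 :: "'b pmf"
    and f :: "nat \<Rightarrow> 'a \<Rightarrow> real" and g :: "nat \<Rightarrow> 'b \<Rightarrow> real"
  assumes bf: "\<And>j a. \<bar>f j a\<bar> \<le> 1" and bg: "\<And>j b. \<bar>g j b\<bar> \<le> 1"
begin

definition "m j = measure_pmf.expectation \<nu>1 (f j)"
definition "m' j = measure_pmf.expectation \<nu>2 (g j)"
definition "d j a = f j a - m j"
definition "d' j b = g j b - m' j"
definition "P x = (\<Prod>j<k. f j (x j))"
definition "P0 = (\<Prod>j<k. m j)"
definition "P1 x = (\<Sum>i<k. d i (x i) * (\<Prod>l\<in>{..<k}-{i}. m l))"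
definition "A x = (\<Sum>j<k. \<bar>d j (x j)\<bar>)"
definition "Q y = (\<Prod>j<k. g j (y j))"
definition "Q0 = (\<Prod>j<k. m' j)"
definition "Q1 y = (\<Sum>i<k. d' i (y i) * (\<Prod>l\<in>{..<k}-{i}. m' l))"
definition "B y = (\<Sum>j<k. \<bar>d' j (y j)\<bar>)"
definition "pw \<rho> \<longleftrightarrow> (\<forall>j1<k. \<forall>j2<k. map_pmf (\<lambda>c. (fst c j1, snd c j2)) \<rho> = pair_pmf \<nu>1 \<nu>2)"
definition "R c = P1 (fst c) * (Q (snd c) - Q0 - Q1 (snd c)) + (P (fst c) - P0 - P1 (fst c)) * (Q (snd c) - Q0)"
definition "V i = measure_pmf.variance \<nu>1 (f i)"
definition "W i = measure_pmf.variance \<nu>2 (g i)"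

lemma m_bd: "\<bar>m j\<bar> \<le> 1" unfolding m_def by (rule pmf_exp_bdd) (rule bf)
lemma m'_bd: "\<bar>m' j\<bar> \<le> 1" unfolding m'_def by (rule pmf_exp_bdd) (rule bg)
lemma d_bd: "\<bar>d j a\<bar> \<le> 2" unfolding d_def using bf[of j a] m_bd[of j] by linarith
lemma d'_bd: "\<bar>d' j a\<bar> \<le> 2" unfolding d'_def using bg[of j a] m'_bd[of j] by linarith

lemma P_bounds: "\<bar>P x - P0\<bar> \<le> A x" "\<bar>P1 x\<bar> \<le> A x" "\<bar>P x - P0 - P1 x\<bar> \<le> (A x)^2"
  using prod_expand[of k "\<lambda>j. f j (x j)" m] bf m_bd
  unfolding P_def P0_def P1_def A_def d_def by auto

lemma Q_bounds: "\<bar>Q y - Q0\<bar> \<le> B y" "\<bar>Q1 y\<bar> \<le> B y" "\<bar>Q y - Q0 - Q1 y\<bar> \<le> (B y)^2"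
  using prod_expand[of k "\<lambda>j. g j (y j)" m'] bg m'_bd
  unfolding Q_def Q0_def Q1_def B_def d'_def by auto

lemma A_bd: "0 \<le> A x" "A x \<le> 2 * real k"
proof -
  show "0 \<le> A x" unfolding A_def by (auto intro: sum_nonneg)
  have "A x \<le> (\<Sum>j<k. 2)" unfolding A_def by (intro sum_mono d_bd)
  then show "A x \<le> 2 * real k" by simp
qed

lemma B_bd: "0 \<le> B x" "B x \<le> 2 * real k"
proof -
  show "0 \<le> B x" unfolding B_def by (auto intro: sum_nonneg)
  have "B x \<le> (\<Sum>j<k. 2)" unfolding B_def by (intro sum_mono d'_bd)
  then show "B x \<le> 2 * real k" by simp
qed

lemma R_bd: "\<bar>R c\<bar> \<le> A (fst c) * (B (snd c))^2 + (A (fst c))^2 * B (snd c)"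
proof -
  have "\<bar>P1 (fst c) * (Q (snd c) - Q0 - Q1 (snd c))\<bar> \<le> A (fst c) * (B (snd c))^2"
    unfolding abs_mult by (intro mult_mono P_bounds Q_bounds) (auto simp: A_bd)
  moreover have "\<bar>(P (fst c) - P0 - P1 (fst c)) * (Q (snd c) - Q0)\<bar> \<le> (A (fst c))^2 * B (snd c)"
    unfolding abs_mult by (intro mult_mono P_bounds Q_bounds) (auto simp: B_bd)
  ultimately show ?thesis unfolding R_def by (smt (verit) abs_triangle_ineq)
qed

lemma Psi_decomp:
  "P (fst c) * Q (snd c) = P0 * Q (snd c) + Q0 * (P (fst c) - P0) + P1 (fst c) * Q1 (snd c) + R c"
  unfolding R_def by (simp add: algebra_simps)


lemma int_X: "integrable (measure_pmf (\<rho> :: ((nat \<Rightarrow> 'a) \<times> (nat \<Rightarrow> 'b)) pmf)) (\<lambda>c. (d i (fst c i))^2 * (d' r (snd c r))^2)"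
proof (rule pmf_int_bdd[where B=16])
  fix c :: "(nat \<Rightarrow> 'a) \<times> (nat \<Rightarrow> 'b)"
  have "(d i (fst c i))^2 \<le> 4" by (rule sq_le4[OF d_bd])
  moreover have "(d' r (snd c r))^2 \<le> 4" by (rule sq_le4[OF d'_bd])
  ultimately have "(d i (fst c i))^2 * (d' r (snd c r))^2 \<le> 4 * 4"
    by (intro mult_mono) auto
  then show "\<bar>(d i (fst c i))^2 * (d' r (snd c r))^2\<bar> \<le> 16" by simp
qed

lemma int_Y: "integrable (measure_pmf (\<rho> :: ((nat \<Rightarrow> 'a) \<times> (nat \<Rightarrow> 'b)) pmf)) (\<lambda>c. (d i (fst c i))^2)"
proof (rule pmf_int_bdd[where B=4])
  fix c :: "(nat \<Rightarrow> 'a) \<times> (nat \<Rightarrow> 'b)"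
  have "\<bar>d i (fst c i)\<bar>^2 \<le> 2^2" by (intro power_mono d_bd) auto
  then show "\<bar>(d i (fst c i))^2\<bar> \<le> 4" by simp
qed

lemma int_Z: "integrable (measure_pmf (\<rho> :: ((nat \<Rightarrow> 'a) \<times> (nat \<Rightarrow> 'b)) pmf)) (\<lambda>c. (d' i (snd c i))^2)"
proof (rule pmf_int_bdd[where B=4])
  fix c :: "(nat \<Rightarrow> 'a) \<times> (nat \<Rightarrow> 'b)"
  have "\<bar>d' i (snd c i)\<bar>^2 \<le> 2^2" by (intro power_mono d'_bd) auto
  then show "\<bar>(d' i (snd c i))^2\<bar> \<le> 4" by simp
qed

lemma exp_map_col:
  fixes h :: "'a \<times> 'b \<Rightarrow> real"
  assumes "pw \<rho>" "i < k" "r < k"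
  shows "measure_pmf.expectation \<rho> (\<lambda>c. h (fst c i, snd c r)) = measure_pmf.expectation (pair_pmf \<nu>1 \<nu>2) h"
proof -
  have "measure_pmf.expectation \<rho> (\<lambda>c. h (fst c i, snd c r)) =
        measure_pmf.expectation (map_pmf (\<lambda>c. (fst c i, snd c r)) \<rho>) h" by simp
  also have "map_pmf (\<lambda>c. (fst c i, snd c r)) \<rho> = pair_pmf \<nu>1 \<nu>2" using assms unfolding pw_def by auto
  finally show ?thesis .
qed

lemma E_d: "measure_pmf.expectation \<nu>1 (d i) = 0"
proof -
  have "measure_pmf.expectation \<nu>1 (\<lambda>a. f i a - m i) = measure_pmf.expectation \<nu>1 (f i) - m i"
    by (subst Bochner_Integration.integral_diff) (auto intro: pmf_int_bdd[where B=1] bf)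
  then show ?thesis by (simp add: d_def[abs_def] m_def)
qed

lemma E_d': "measure_pmf.expectation \<nu>2 (d' i) = 0"
proof -
  have "measure_pmf.expectation \<nu>2 (\<lambda>a. g i a - m' i) = measure_pmf.expectation \<nu>2 (g i) - m' i"
    by (subst Bochner_Integration.integral_diff) (auto intro: pmf_int_bdd[where B=1] bg)
  then show ?thesis by (simp add: d'_def[abs_def] m'_def)
qed

lemma exp_dd:
  assumes "pw \<rho>" "i < k" "r < k"
  shows "measure_pmf.expectation \<rho> (\<lambda>c. d i (fst c i) * d' r (snd c r)) = 0"
proof -
  have "measure_pmf.expectation \<rho> (\<lambda>c. d i (fst c i) * d' r (snd c r)) =
        measure_pmf.expectation (pair_pmf \<nu>1 \<nu>2) (\<lambda>(a,b). d i a * d' r b)"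
    using exp_map_col[OF assms, of "\<lambda>(a,b). d i a * d' r b"] by simp
  also have "\<dots> = measure_pmf.expectation \<nu>1 (d i) * measure_pmf.expectation \<nu>2 (d' r)"
    by (rule pmf_int_pair_prod[where B=2 and B'=2]) (rule d_bd, rule d'_bd)
  finally show ?thesis by (simp add: E_d)
qed

lemma exp_sq:
  assumes "pw \<rho>" "i < k" "r < k"
  shows "measure_pmf.expectation \<rho> (\<lambda>c. (d i (fst c i))^2 * (d' r (snd c r))^2) = V i * W r"
proof -
  have "measure_pmf.expectation \<rho> (\<lambda>c. (d i (fst c i))^2 * (d' r (snd c r))^2) =
        measure_pmf.expectation (pair_pmf \<nu>1 \<nu>2) (\<lambda>(a,b). (d i a)^2 * (d' r b)^2)"
    using exp_map_col[OF assms, of "\<lambda>(a,b). (d i a)^2 * (d' r b)^2"] by simp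
  also have "\<dots> = measure_pmf.expectation \<nu>1 (\<lambda>a. (d i a)^2) * measure_pmf.expectation \<nu>2 (\<lambda>b. (d' r b)^2)"
  proof (rule pmf_int_pair_prod[where B=4 and B'=4])
    fix a show "\<bar>(d i a)^2\<bar> \<le> 4" using power_mono[OF d_bd[of i a], of 2] by (simp add: power2_abs)
  next
    fix b show "\<bar>(d' r b)^2\<bar> \<le> 4" using power_mono[OF d'_bd[of r b], of 2] by (simp add: power2_abs)
  qed
  finally show ?thesis by (simp add: V_def W_def d_def[abs_def] d'_def[abs_def] m_def m'_def)
qed

lemma exp_sqV:
  assumes "pw \<rho>" "i < k"
  shows "measure_pmf.expectation \<rho> (\<lambda>c. (d i (fst c i))^2) = V i"
proof -
  have "measure_pmf.expectation \<rho> (\<lambda>c. (d i (fst c i))^2) =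
        measure_pmf.expectation (pair_pmf \<nu>1 \<nu>2) (\<lambda>x. (d i (fst x))^2)"
    using exp_map_col[OF assms assms(2), of "\<lambda>x. (d i (fst x))^2"] by simp
  also have "\<dots> = measure_pmf.expectation \<nu>1 (\<lambda>a. (d i a)^2)"
    by (rule expectation_pair_pmf_fst)
  also have "\<dots> = V i" by (simp add: V_def d_def[abs_def] m_def)
  finally show ?thesis .
qed

lemma exp_sqW:
  assumes "pw \<rho>" "i < k"
  shows "measure_pmf.expectation \<rho> (\<lambda>c. (d' i (snd c i))^2) = W i"
proof -
  have "measure_pmf.expectation \<rho> (\<lambda>c. (d' i (snd c i))^2) =
        measure_pmf.expectation (pair_pmf \<nu>1 \<nu>2) (\<lambda>x. (d' i (snd x))^2)"
    using exp_map_col[OF assms assms(2), of "\<lambda>x. (d' i (snd x))^2"] by simp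
  also have "\<dots> = measure_pmf.expectation \<nu>2 (\<lambda>a. (d' i a)^2)"
    by (rule expectation_pair_pmf_snd)
  also have "\<dots> = W i" by (simp add: W_def d'_def[abs_def] m'_def)
  finally show ?thesis .
qed


lemma int_dd: "integrable (measure_pmf (\<rho> :: ((nat \<Rightarrow> 'a) \<times> (nat \<Rightarrow> 'b)) pmf)) (\<lambda>c. d i (fst c i) * d' r (snd c r))"
proof (rule pmf_int_bdd[where B=4])
  fix c :: "(nat \<Rightarrow> 'a) \<times> (nat \<Rightarrow> 'b)"
  have "\<bar>d i (fst c i)\<bar> * \<bar>d' r (snd c r)\<bar> \<le> 2 * 2" by (intro mult_mono d_bd d'_bd) auto
  then show "\<bar>d i (fst c i) * d' r (snd c r)\<bar> \<le> 4" by (simp add: abs_mult)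
qed

lemma exp_P1Q1:
  assumes "pw \<rho>"
  shows "measure_pmf.expectation \<rho> (\<lambda>c. P1 (fst c) * Q1 (snd c)) = 0"
proof -
  define \<alpha> where "\<alpha> i = (\<Prod>l\<in>{..<k}-{i}. m l)" for i
  define \<beta> where "\<beta> i = (\<Prod>l\<in>{..<k}-{i}. m' l)" for i
  have eq: "(\<lambda>c. P1 (fst c) * Q1 (snd c)) = (\<lambda>c. \<Sum>i<k. \<Sum>r<k. (\<alpha> i * \<beta> r) * (d i (fst c i) * d' r (snd c r)))"
    by (simp add: fun_eq_iff P1_def Q1_def sum_product mult_ac \<alpha>_def \<beta>_def)
  have "measure_pmf.expectation \<rho> (\<lambda>c. \<Sum>i<k. \<Sum>r<k. (\<alpha> i * \<beta> r) * (d i (fst c i) * d' r (snd c r)))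
      = (\<Sum>i<k. \<Sum>r<k. (\<alpha> i * \<beta> r) * measure_pmf.expectation \<rho> (\<lambda>c. d i (fst c i) * d' r (snd c r)))"
    by (simp add: Bochner_Integration.integral_sum integrable_sum int_dd)
  also have "\<dots> = 0"
    by (intro sum.neutral ballI) (simp add: exp_dd[OF assms])
  finally show ?thesis unfolding eq .
qed

lemma R_pt:
  assumes "l > 0"
  shows "\<bar>R c\<bar> \<le> l * real k^2 * (\<Sum>i<k. \<Sum>r<k. (d i (fst c i))^2 * (d' r (snd c r))^2)
           + real k * ((\<Sum>i<k. (d i (fst c i))^2) + (\<Sum>r<k. (d' r (snd c r))^2)) / (2 * l)"
proof -
  define a where "a i = d i (fst c i)" for i
  define b where "b i = d' i (snd c i)" for i
  have 1: "A (fst c) * (B (snd c))^2 \<le> (l * real k^2 * (\<Sum>i<k. \<Sum>r<k. (a i)^2 * (b r)^2) + real k * (\<Sum>r<k. (b r)^2) / l) / 2"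
    using AB_bound[OF assms, where k=k and a=a and b=b] unfolding A_def B_def a_def b_def .
  have 2: "B (snd c) * (A (fst c))^2 \<le> (l * real k^2 * (\<Sum>i<k. \<Sum>r<k. (b i)^2 * (a r)^2) + real k * (\<Sum>r<k. (a r)^2) / l) / 2"
    using AB_bound[OF assms, where k=k and a=b and b=a] unfolding A_def B_def a_def b_def .
  have sw: "(\<Sum>i<k. \<Sum>r<k. (b i)^2 * (a r)^2) = (\<Sum>i<k. \<Sum>r<k. (a i)^2 * (b r)^2)"
    by (subst sum.swap) (simp add: mult.commute)
  have "\<bar>R c\<bar> \<le> A (fst c) * (B (snd c))^2 + B (snd c) * (A (fst c))^2"
    using R_bd[of c] by (simp add: mult.commute)
  also have "\<dots> \<le> l * real k^2 * (\<Sum>i<k. \<Sum>r<k. (a i)^2 * (b r)^2) + real k * ((\<Sum>i<k. (a i)^2) + (\<Sum>r<k. (b r)^2)) / (2 * l)"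
    using 1 2 sw assms by (simp add: field_simps)
  finally show ?thesis unfolding a_def b_def .
qed

lemma R_bd2: "\<bar>R c\<bar> \<le> 16 * real k^3"
proof -
  have a: "A (fst c) * (B (snd c))^2 \<le> (2 * real k) * (2 * real k)^2"
    by (intro mult_mono power_mono A_bd B_bd) (auto simp: A_bd B_bd)
  have b: "(A (fst c))^2 * B (snd c) \<le> (2 * real k)^2 * (2 * real k)"
    by (intro mult_mono power_mono A_bd B_bd) (auto simp: A_bd B_bd)
  show ?thesis using R_bd[of c] a b by (simp add: power2_eq_square power3_eq_cube)
qed

lemma exp_R:
  assumes "pw \<rho>" "l > 0"
  shows "\<bar>measure_pmf.expectation \<rho> R\<bar> \<le> l * real k^2 * (\<Sum>i<k. \<Sum>r<k. V i * W r)
           + real k * ((\<Sum>i<k. V i) + (\<Sum>r<k. W r)) / (2 * l)"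
proof -
  define T where "T c = l * real k^2 * (\<Sum>i<k. \<Sum>r<k. (d i (fst c i))^2 * (d' r (snd c r))^2)
           + real k * ((\<Sum>i<k. (d i (fst c i))^2) + (\<Sum>r<k. (d' r (snd c r))^2)) / (2 * l)" for c
  have intR: "integrable (measure_pmf \<rho>) R" by (rule pmf_int_bdd[where B="16 * real k^3"]) (rule R_bd2)
  have intT: "integrable (measure_pmf \<rho>) T"
    unfolding T_def by (simp add: integrable_sum int_X int_Y int_Z)
  have "\<bar>measure_pmf.expectation \<rho> R\<bar> \<le> measure_pmf.expectation \<rho> (\<lambda>c. \<bar>R c\<bar>)"
    by (rule integral_abs_bound)
  also have "\<dots> \<le> measure_pmf.expectation \<rho> T"
    by (rule integral_mono) (use intR intT R_pt[OF assms(2)] in \<open>auto simp: T_def\<close>)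
  also have "\<dots> = l * real k^2 * (\<Sum>i<k. \<Sum>r<k. measure_pmf.expectation \<rho> (\<lambda>c. (d i (fst c i))^2 * (d' r (snd c r))^2))
           + real k * ((\<Sum>i<k. measure_pmf.expectation \<rho> (\<lambda>c. (d i (fst c i))^2)) + (\<Sum>r<k. measure_pmf.expectation \<rho> (\<lambda>c. (d' r (snd c r))^2))) / (2 * l)"
    unfolding T_def by (simp add: Bochner_Integration.integral_sum integrable_sum int_X int_Y int_Z)
  also have "\<dots> = l * real k^2 * (\<Sum>i<k. \<Sum>r<k. V i * W r) + real k * ((\<Sum>i<k. V i) + (\<Sum>r<k. W r)) / (2 * l)"
    using assms(1) by (simp add: exp_sq exp_sqV exp_sqW)
  finally show ?thesis .
qed


lemma P_bd: "\<bar>P x\<bar> \<le> 1"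
  unfolding P_def abs_prod by (rule prod_le_1) (use bf in auto)
lemma Q_bd: "\<bar>Q x\<bar> \<le> 1"
  unfolding Q_def abs_prod by (rule prod_le_1) (use bg in auto)
lemma P0_bd: "\<bar>P0\<bar> \<le> 1"
  unfolding P0_def abs_prod by (rule prod_le_1) (use m_bd in auto)
lemma Q0_bd: "\<bar>Q0\<bar> \<le> 1"
  unfolding Q0_def abs_prod by (rule prod_le_1) (use m'_bd in auto)

lemma decomp_E:
  assumes "pw \<rho>"
  shows "measure_pmf.expectation \<rho> (\<lambda>c. P (fst c) * Q (snd c)) =
     P0 * measure_pmf.expectation (map_pmf snd \<rho>) Q + Q0 * measure_pmf.expectation (map_pmf fst \<rho>) (\<lambda>x. P x - P0)
     + measure_pmf.expectation \<rho> R"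
proof -
  have i1: "integrable (measure_pmf \<rho>) (\<lambda>c. P0 * Q (snd c))"
    by (rule pmf_int_bdd[where B=1]) (simp add: abs_mult, rule mult_le_one, auto simp: P0_bd Q_bd)
  have i2: "integrable (measure_pmf \<rho>) (\<lambda>c. Q0 * (P (fst c) - P0))"
  proof (rule pmf_int_bdd[where B=2])
    fix c :: "(nat \<Rightarrow> 'a) \<times> (nat \<Rightarrow> 'b)"
    have "\<bar>P (fst c) - P0\<bar> \<le> 2" using P_bd[of "fst c"] P0_bd by linarith
    then have "\<bar>Q0\<bar> * \<bar>P (fst c) - P0\<bar> \<le> 1 * 2" by (intro mult_mono Q0_bd) auto
    then show "\<bar>Q0 * (P (fst c) - P0)\<bar> \<le> 2" by (simp add: abs_mult)
  qed
  have i3: "integrable (measure_pmf \<rho>) (\<lambda>c. P1 (fst c) * Q1 (snd c))"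
  proof (rule pmf_int_bdd[where B="(2 * real k) * (2 * real k)"])
    fix c :: "(nat \<Rightarrow> 'a) \<times> (nat \<Rightarrow> 'b)"
    have "\<bar>P1 (fst c)\<bar> * \<bar>Q1 (snd c)\<bar> \<le> (2 * real k) * (2 * real k)"
      by (intro mult_mono order_trans[OF P_bounds(2) A_bd(2)] order_trans[OF Q_bounds(2) B_bd(2)]) auto
    then show "\<bar>P1 (fst c) * Q1 (snd c)\<bar> \<le> (2 * real k) * (2 * real k)" by (simp add: abs_mult)
  qed
  have i4: "integrable (measure_pmf \<rho>) R" by (rule pmf_int_bdd[where B="16 * real k^3"]) (rule R_bd2)
  have "measure_pmf.expectation \<rho> (\<lambda>c. P (fst c) * Q (snd c)) =
        measure_pmf.expectation \<rho> (\<lambda>c. P0 * Q (snd c) + Q0 * (P (fst c) - P0) + P1 (fst c) * Q1 (snd c) + R c)"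
    by (simp add: Psi_decomp)
  also have "\<dots> = measure_pmf.expectation \<rho> (\<lambda>c. P0 * Q (snd c)) + measure_pmf.expectation \<rho> (\<lambda>c. Q0 * (P (fst c) - P0))
      + measure_pmf.expectation \<rho> (\<lambda>c. P1 (fst c) * Q1 (snd c)) + measure_pmf.expectation \<rho> R"
    using i1 i2 i3 i4 by (simp add: Bochner_Integration.integral_add)
  also have "\<dots> = P0 * measure_pmf.expectation (map_pmf snd \<rho>) Q + Q0 * measure_pmf.expectation (map_pmf fst \<rho>) (\<lambda>x. P x - P0)
     + measure_pmf.expectation \<rho> R"
    by (simp add: exp_P1Q1[OF assms])
  finally show ?thesis .
qed

lemma core:
  assumes "pw \<rho>1" "pw \<rho>2" "map_pmf fst \<rho>1 = map_pmf fst \<rho>2" "map_pmf snd \<rho>1 = map_pmf snd \<rho>2" "l > 0"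
  shows "\<bar>measure_pmf.expectation \<rho>1 (\<lambda>c. P (fst c) * Q (snd c)) - measure_pmf.expectation \<rho>2 (\<lambda>c. P (fst c) * Q (snd c))\<bar>
     \<le> 2 * l * real k^2 * (\<Sum>i<k. \<Sum>r<k. V i * W r) + real k * ((\<Sum>i<k. V i) + (\<Sum>r<k. W r)) / l"
proof -
  have "\<bar>measure_pmf.expectation \<rho>1 (\<lambda>c. P (fst c) * Q (snd c)) - measure_pmf.expectation \<rho>2 (\<lambda>c. P (fst c) * Q (snd c))\<bar>
     = \<bar>measure_pmf.expectation \<rho>1 R - measure_pmf.expectation \<rho>2 R\<bar>"
    unfolding decomp_E[OF assms(1)] decomp_E[OF assms(2)] assms(3,4) by simp
  also have "\<dots> \<le> \<bar>measure_pmf.expectation \<rho>1 R\<bar> + \<bar>measure_pmf.expectation \<rho>2 R\<bar>" by simp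
  also have "\<dots> \<le> 2 * (l * real k^2 * (\<Sum>i<k. \<Sum>r<k. V i * W r) + real k * ((\<Sum>i<k. V i) + (\<Sum>r<k. W r)) / (2 * l))"
    using add_mono[OF exp_R[OF assms(1,5)] exp_R[OF assms(2,5)]] by (simp only: mult_2)
  also have "\<dots> = 2 * l * real k^2 * (\<Sum>i<k. \<Sum>r<k. V i * W r) + real k * ((\<Sum>i<k. V i) + (\<Sum>r<k. W r)) / l"
    using assms(5) by (simp add: field_simps)
  finally show ?thesis .
qed

end

lemma core_concrete:
  fixes \<rho>1 \<rho>2 :: "((nat \<Rightarrow> 'a) \<times> (nat \<Rightarrow> 'b)) pmf"
  assumes bf: "\<And>j a. \<bar>f j a\<bar> \<le> 1" and bg: "\<And>j b. \<bar>g j b\<bar> \<le> 1"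
    and pw1: "\<And>j1 j2. j1 < k \<Longrightarrow> j2 < k \<Longrightarrow> map_pmf (\<lambda>c. (fst c j1, snd c j2)) \<rho>1 = pair_pmf \<nu>1 \<nu>2"
    and pw2: "\<And>j1 j2. j1 < k \<Longrightarrow> j2 < k \<Longrightarrow> map_pmf (\<lambda>c. (fst c j1, snd c j2)) \<rho>2 = pair_pmf \<nu>1 \<nu>2"
    and mf: "map_pmf fst \<rho>1 = map_pmf fst \<rho>2" and ms: "map_pmf snd \<rho>1 = map_pmf snd \<rho>2"
    and l: "l > 0"
  shows "\<bar>measure_pmf.expectation \<rho>1 (\<lambda>c. \<Prod>j<k. f j (fst c j) * g j (snd c j))
        - measure_pmf.expectation \<rho>2 (\<lambda>c. \<Prod>j<k. f j (fst c j) * g j (snd c j))\<bar>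
     \<le> 2 * l * real k^2 * (\<Sum>i<k. \<Sum>r<k. measure_pmf.variance \<nu>1 (f i) * measure_pmf.variance \<nu>2 (g r))
        + real k * ((\<Sum>i<k. measure_pmf.variance \<nu>1 (f i)) + (\<Sum>r<k. measure_pmf.variance \<nu>2 (g r))) / l"
proof -
  interpret C: core_setup k \<nu>1 \<nu>2 f g by unfold_locales (auto intro: bf bg)
  have "C.pw \<rho>1" "C.pw \<rho>2" unfolding C.pw_def using pw1 pw2 by auto
  from C.core[OF this mf ms l] show ?thesis
    by (simp add: C.P_def C.Q_def C.V_def C.W_def prod.distrib)
qed

lemma var_bd:
  fixes f :: "'a \<Rightarrow> real"
  assumes "\<And>x. \<bar>f x\<bar> \<le> 1"
  shows "0 \<le> measure_pmf.variance p f" "measure_pmf.variance p f \<le> 4"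
proof -
  have e: "\<bar>measure_pmf.expectation p f\<bar> \<le> 1" by (rule pmf_exp_bdd) (rule assms)
  have b: "\<bar>(f x - measure_pmf.expectation p f)^2\<bar> \<le> 4" for x
  proof -
    have "\<bar>f x - measure_pmf.expectation p f\<bar> \<le> 2" using assms[of x] e by linarith
    then show ?thesis using sq_le4 by simp
  qed
  show "0 \<le> measure_pmf.variance p f" by (rule Bochner_Integration.integral_nonneg) simp
  show "measure_pmf.variance p f \<le> 4" using pmf_exp_bdd[OF b, of p] by simp
qed

lemma Phi_bd:
  fixes F :: "(nat \<Rightarrow> 'a) \<Rightarrow> real" and G :: "(nat \<Rightarrow> 'b) \<Rightarrow> real"
  assumes "\<And>x. \<bar>F x\<bar> \<le> 1" "\<And>y. \<bar>G y\<bar> \<le> 1"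
  shows "\<bar>\<Prod>j<k. F (u j) * G (v j)\<bar> \<le> 1"
  unfolding abs_prod by (rule prod_le_1) (auto simp: abs_mult intro!: mult_le_one assms)

lemma pw_pi:
  fixes \<mu> :: "((nat \<Rightarrow> 'a) \<times> (nat \<Rightarrow> 'b)) pmf"
  assumes pw\<mu>: "\<And>j1 j2. j1<k \<Longrightarrow> j2<k \<Longrightarrow> map_pmf (\<lambda>c. (fst c j1, snd c j2)) \<mu> = pair_pmf \<nu>1 \<nu>2"
    and j: "j1 < k" "j2 < k"
  shows "map_pmf (\<lambda>c. (fst c j1, snd c j2)) (pair_pmf (map_pmf fst \<mu>) (map_pmf snd \<mu>)) = pair_pmf \<nu>1 \<nu>2"
proof -
  have a: "map_pmf (\<lambda>c. fst c j1) \<mu> = \<nu>1"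
  proof -
    have "map_pmf (\<lambda>c. fst c j1) \<mu> = map_pmf fst (map_pmf (\<lambda>c. (fst c j1, snd c j1)) \<mu>)"
      by (simp add: pmf.map_comp o_def)
    also have "\<dots> = \<nu>1" using pw\<mu>[OF j(1) j(1)] by (simp add: map_fst_pair_pmf)
    finally show ?thesis .
  qed
  have b: "map_pmf (\<lambda>c. snd c j2) \<mu> = \<nu>2"
  proof -
    have "map_pmf (\<lambda>c. snd c j2) \<mu> = map_pmf snd (map_pmf (\<lambda>c. (fst c j2, snd c j2)) \<mu>)"
      by (simp add: pmf.map_comp o_def)
    also have "\<dots> = \<nu>2" using pw\<mu>[OF j(2) j(2)] by (simp add: map_snd_pair_pmf)
    finally show ?thesis .
  qed
  have "map_pmf (\<lambda>c. (fst c j1, snd c j2)) (pair_pmf (map_pmf fst \<mu>) (map_pmf snd \<mu>))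
      = map_pmf (\<lambda>(x, y). (x j1, y j2)) (pair_pmf (map_pmf fst \<mu>) (map_pmf snd \<mu>))"
    by (simp add: case_prod_unfold)
  also have "\<dots> = pair_pmf (map_pmf (\<lambda>x. x j1) (map_pmf fst \<mu>)) (map_pmf (\<lambda>y. y j2) (map_pmf snd \<mu>))"
    by (rule map_pair)
  also have "\<dots> = pair_pmf \<nu>1 \<nu>2" using a b by (simp add: pmf.map_comp o_def)
  finally show ?thesis .
qed

lemma exp_cong_set:
  fixes f g :: "'a \<Rightarrow> real"
  assumes "\<And>x. x \<in> set_pmf p \<Longrightarrow> f x = g x"
  shows "measure_pmf.expectation p f = measure_pmf.expectation p g"
  by (rule Bochner_Integration.integral_cong_AE) (auto intro!: AE_pmfI assms)

lemma hyb_step: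
  fixes \<mu> :: "((nat \<Rightarrow> 'a) \<times> (nat \<Rightarrow> 'b)) pmf" and q :: "nat \<Rightarrow> ((nat \<Rightarrow> 'a) \<times> (nat \<Rightarrow> 'b)) pmf"
    and F :: "(nat \<Rightarrow> 'a) \<Rightarrow> real" and G :: "(nat \<Rightarrow> 'b) \<Rightarrow> real"
  assumes pw\<mu>: "\<And>j1 j2. j1<k \<Longrightarrow> j2<k \<Longrightarrow> map_pmf (\<lambda>c. (fst c j1, snd c j2)) \<mu> = pair_pmf \<nu>1 \<nu>2"
    and bF: "\<And>x. \<bar>F x\<bar> \<le> 1" and bG: "\<And>y. \<bar>G y\<bar> \<le> 1" and l: "l > 0" and t: "t < L"
    and q: "\<And>i. q i = \<mu> \<or> q i = pair_pmf (map_pmf fst \<mu>) (map_pmf snd \<mu>)"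
  shows "\<bar>measure_pmf.expectation (Pi_pmf {..<L} undefined (q(t:=\<mu>)))
             (\<lambda>Z. \<Prod>j<k. F (row L (\<lambda>i. fst (Z i)) j) * G (row L (\<lambda>i. snd (Z i)) j))
         - measure_pmf.expectation (Pi_pmf {..<L} undefined (q(t:=pair_pmf (map_pmf fst \<mu>) (map_pmf snd \<mu>))))
             (\<lambda>Z. \<Prod>j<k. F (row L (\<lambda>i. fst (Z i)) j) * G (row L (\<lambda>i. snd (Z i)) j))\<bar>
     \<le> 2 * l * real k^4 * (influence \<nu>1 L F t * influence \<nu>2 L G t)
        + real k^2 * (influence \<nu>1 L F t + influence \<nu>2 L G t) / l"
proof -
  define \<pi> where "\<pi> = pair_pmf (map_pmf fst \<mu>) (map_pmf snd \<mu>)"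
  define \<Phi> where "\<Phi> = (\<lambda>Z::nat \<Rightarrow> (nat \<Rightarrow> 'a) \<times> (nat \<Rightarrow> 'b). \<Prod>j<k. F (row L (\<lambda>i. fst (Z i)) j) * G (row L (\<lambda>i. snd (Z i)) j))"
  define M where "M = Pi_pmf {..<L} undefined q"
  define vF where "vF x = measure_pmf.variance \<nu>1 (\<lambda>a. F (x(t:=a)))" for x
  define vG where "vG y = measure_pmf.variance \<nu>2 (\<lambda>b. G (y(t:=b)))" for y
  define rX where "rX Z j = row L (\<lambda>i. fst (Z i)) j" for Z :: "nat \<Rightarrow> (nat \<Rightarrow> 'a) \<times> (nat \<Rightarrow> 'b)" and j
  define rY where "rY Z j = row L (\<lambda>i. snd (Z i)) j" for Z :: "nat \<Rightarrow> (nat \<Rightarrow> 'a) \<times> (nat \<Rightarrow> 'b)" and j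
  define IF where "IF = influence \<nu>1 L F t"
  define IG where "IG = influence \<nu>2 L G t"
  have IFeq: "IF = measure_pmf.expectation (prod_pmf L \<nu>1) vF" by (simp add: IF_def influence_def vF_def[abs_def])
  have IGeq: "IG = measure_pmf.expectation (prod_pmf L \<nu>2) vG" by (simp add: IG_def influence_def vG_def[abs_def])
  have pw\<pi>: "map_pmf (\<lambda>c. (fst c j1, snd c j2)) \<pi> = pair_pmf \<nu>1 \<nu>2" if "j1<k" "j2<k" for j1 j2
    unfolding \<pi>_def by (rule pw_pi[OF pw\<mu> that])
  have pwq: "map_pmf (\<lambda>c. (fst c j1, snd c j2)) (q i) = pair_pmf \<nu>1 \<nu>2" if "j1<k" "j2<k" for i j1 j2
    using q[of i] pw\<mu>[OF that] pw\<pi>[OF that] unfolding \<pi>_def by auto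
  have \<Phi>bd: "\<bar>\<Phi> Z\<bar> \<le> 1" for Z unfolding \<Phi>_def by (rule Phi_bd[OF bF bG])
  have Ers: "measure_pmf.expectation (Pi_pmf {..<L} undefined (q(t:=\<rho>))) \<Phi>
      = measure_pmf.expectation M (\<lambda>Z. measure_pmf.expectation \<rho> (\<lambda>c. \<Phi> (Z(t:=c))))" for \<rho>
    unfolding M_def using t
    by (subst Pi_resample) (auto simp: pmf_int_bind[where B=1] \<Phi>bd)
  have \<Phi>upd: "\<Phi> (Z(t:=c)) = (\<Prod>j<k. F ((rX Z j)(t := fst c j)) * G ((rY Z j)(t := snd c j)))" for Z c
  proof -
    have "row L (\<lambda>i. fst ((Z(t:=c)) i)) j = (rX Z j)(t := fst c j)" for j
      using t by (auto simp: rX_def row_def fun_eq_iff restrict_def)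
    moreover have "row L (\<lambda>i. snd ((Z(t:=c)) i)) j = (rY Z j)(t := snd c j)" for j
      using t by (auto simp: rY_def row_def fun_eq_iff restrict_def)
    ultimately show ?thesis unfolding \<Phi>_def by simp
  qed
  define D where "D Z = measure_pmf.expectation \<mu> (\<lambda>c. \<Phi> (Z(t:=c))) - measure_pmf.expectation \<pi> (\<lambda>c. \<Phi> (Z(t:=c)))" for Z
  define bnd where "bnd Z = 2 * l * real k^2 * (\<Sum>i<k. \<Sum>r<k. vF (rX Z i) * vG (rY Z r))
        + real k * ((\<Sum>i<k. vF (rX Z i)) + (\<Sum>r<k. vG (rY Z r))) / l" for Z
  have Dbd: "\<bar>D Z\<bar> \<le> bnd Z" for Z
  proof -
    have "\<bar>D Z\<bar> = \<bar>measure_pmf.expectation \<mu> (\<lambda>c. \<Prod>j<k. F ((rX Z j)(t := fst c j)) * G ((rY Z j)(t := snd c j)))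
        - measure_pmf.expectation \<pi> (\<lambda>c. \<Prod>j<k. F ((rX Z j)(t := fst c j)) * G ((rY Z j)(t := snd c j)))\<bar>"
      unfolding D_def \<Phi>upd ..
    also have "\<dots> \<le> bnd Z"
      unfolding bnd_def vF_def vG_def
      by (rule core_concrete[where f="\<lambda>j a. F ((rX Z j)(t := a))" and g="\<lambda>j b. G ((rY Z j)(t := b))"])
         (auto intro: bF bG pw\<mu> pw\<pi>[unfolded \<pi>_def] l simp: \<pi>_def map_fst_pair_pmf map_snd_pair_pmf)
    finally show ?thesis .
  qed
  have vFb: "0 \<le> vF x" "vF x \<le> 4" for x unfolding vF_def by (rule var_bd, rule bF)+
  have vGb: "0 \<le> vG x" "vG x \<le> 4" for x unfolding vG_def by (rule var_bd, rule bG)+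
  have int1: "integrable (measure_pmf M) (\<lambda>Z. vF (rX Z i) * vG (rY Z r))" for i r
  proof (rule pmf_int_bdd[where B=16])
    fix Z
    have "vF (rX Z i) * vG (rY Z r) \<le> 4 * 4" by (intro mult_mono vFb vGb) auto
    then show "\<bar>vF (rX Z i) * vG (rY Z r)\<bar> \<le> 16" using vFb vGb by (simp add: abs_mult)
  qed
  have int2: "integrable (measure_pmf M) (\<lambda>Z. vF (rX Z i))" for i
    by (rule pmf_int_bdd[where B=4]) (use vFb in simp)
  have int3: "integrable (measure_pmf M) (\<lambda>Z. vG (rY Z i))" for i
    by (rule pmf_int_bdd[where B=4]) (use vGb in simp)
  have rows: "map_pmf (\<lambda>Z. (rX Z i, rY Z r)) M = pair_pmf (prod_pmf L \<nu>1) (prod_pmf L \<nu>2)" if "i<k" "r<k" for i r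
    unfolding M_def rX_def rY_def by (rule Pi_rows) (rule pwq[OF that])
  have E1: "measure_pmf.expectation M (\<lambda>Z. vF (rX Z i) * vG (rY Z r)) = IF * IG" if "i<k" "r<k" for i r
  proof -
    have "measure_pmf.expectation M (\<lambda>Z. vF (rX Z i) * vG (rY Z r))
        = measure_pmf.expectation (map_pmf (\<lambda>Z. (rX Z i, rY Z r)) M) (\<lambda>(x,y). vF x * vG y)" by simp
    also have "\<dots> = measure_pmf.expectation (prod_pmf L \<nu>1) vF * measure_pmf.expectation (prod_pmf L \<nu>2) vG"
      unfolding rows[OF that] by (rule pmf_int_pair_prod[where B=4 and B'=4]) (use vFb vGb in auto)
    finally show ?thesis by (simp add: IFeq IGeq)
  qed
  have E2: "measure_pmf.expectation M (\<lambda>Z. vF (rX Z i)) = IF" if "i<k" for i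
  proof -
    have "measure_pmf.expectation M (\<lambda>Z. vF (rX Z i))
        = measure_pmf.expectation (map_pmf (\<lambda>Z. (rX Z i, rY Z i)) M) (\<lambda>w. vF (fst w))" by simp
    also have "\<dots> = measure_pmf.expectation (prod_pmf L \<nu>1) vF"
      unfolding rows[OF that that] by (rule expectation_pair_pmf_fst)
    finally show ?thesis by (simp add: IFeq)
  qed
  have E3: "measure_pmf.expectation M (\<lambda>Z. vG (rY Z i)) = IG" if "i<k" for i
  proof -
    have "measure_pmf.expectation M (\<lambda>Z. vG (rY Z i))
        = measure_pmf.expectation (map_pmf (\<lambda>Z. (rX Z i, rY Z i)) M) (\<lambda>w. vG (snd w))" by simp
    also have "\<dots> = measure_pmf.expectation (prod_pmf L \<nu>2) vG"
      unfolding rows[OF that that] by (rule expectation_pair_pmf_snd)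
    finally show ?thesis by (simp add: IGeq)
  qed
  have intE: "integrable (measure_pmf M) (\<lambda>Z. measure_pmf.expectation \<rho> (\<lambda>c. \<Phi> (Z(t:=c))))" for \<rho>
    by (rule pmf_int_bdd[where B=1]) (rule pmf_exp_bdd, rule \<Phi>bd)
  have intbnd: "integrable (measure_pmf M) bnd"
    unfolding bnd_def by (simp add: integrable_sum int1 int2 int3)
  have "measure_pmf.expectation (Pi_pmf {..<L} undefined (q(t:=\<mu>))) \<Phi>
        - measure_pmf.expectation (Pi_pmf {..<L} undefined (q(t:=\<pi>))) \<Phi> = measure_pmf.expectation M D"
    unfolding Ers D_def by (rule Bochner_Integration.integral_diff[symmetric]) (rule intE)+
  also have "\<bar>\<dots>\<bar> \<le> measure_pmf.expectation M (\<lambda>Z. \<bar>D Z\<bar>)" by (rule integral_abs_bound)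
  also have "\<dots> \<le> measure_pmf.expectation M bnd"
  proof (rule integral_mono)
    show "integrable (measure_pmf M) (\<lambda>Z. \<bar>D Z\<bar>)"
      unfolding D_def by (intro integrable_abs Bochner_Integration.integrable_diff intE)
  qed (use Dbd intbnd in auto)
  also have "\<dots> = 2 * l * real k^2 * (\<Sum>i<k. \<Sum>r<k. measure_pmf.expectation M (\<lambda>Z. vF (rX Z i) * vG (rY Z r)))
        + real k * ((\<Sum>i<k. measure_pmf.expectation M (\<lambda>Z. vF (rX Z i))) + (\<Sum>r<k. measure_pmf.expectation M (\<lambda>Z. vG (rY Z r)))) / l"
    unfolding bnd_def by (simp add: Bochner_Integration.integral_sum integrable_sum int1 int2 int3)
  also have "\<dots> = 2 * l * real k^2 * (real k * real k * (IF * IG)) + real k * (real k * IF + real k * IG) / l"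
    by (simp add: E1 E2 E3)
  also have "\<dots> = 2 * l * real k^4 * (IF * IG) + real k^2 * (IF + IG) / l"
    by (simp add: power2_eq_square power4_eq_xxxx field_simps)
  finally show ?thesis unfolding \<Phi>_def \<pi>_def IF_def IG_def .
qed

lemma main_bounded:
  fixes \<mu> :: "((nat \<Rightarrow> 'a) \<times> (nat \<Rightarrow> 'b)) pmf"
    and F :: "(nat \<Rightarrow> 'a) \<Rightarrow> real" and G :: "(nat \<Rightarrow> 'b) \<Rightarrow> real"
  assumes pw\<mu>: "\<And>j1 j2. j1<k \<Longrightarrow> j2<k \<Longrightarrow> map_pmf (\<lambda>c. (fst c j1, snd c j2)) \<mu> = pair_pmf \<nu>1 \<nu>2"
    and bF: "\<And>x. \<bar>F x\<bar> \<le> 1" and bG: "\<And>y. \<bar>G y\<bar> \<le> 1" and l: "l > 0"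
  shows "\<bar>measure_pmf.expectation (prod_pmf L \<mu>)
               (\<lambda>Z. \<Prod>j<k. F (row L (\<lambda>i. fst (Z i)) j) * G (row L (\<lambda>i. snd (Z i)) j))
            - measure_pmf.expectation (prod_pmf L (map_pmf fst \<mu>))
               (\<lambda>X. \<Prod>j<k. F (row L X j))
              * measure_pmf.expectation (prod_pmf L (map_pmf snd \<mu>))
               (\<lambda>Y. \<Prod>j<k. G (row L Y j))\<bar>
     \<le> 2 * l * real k^4 * (\<Sum>t<L. influence \<nu>1 L F t * influence \<nu>2 L G t)
        + real k^2 * ((\<Sum>t<L. influence \<nu>1 L F t) + (\<Sum>t<L. influence \<nu>2 L G t)) / l"
proof -
  define \<pi> where "\<pi> = pair_pmf (map_pmf fst \<mu>) (map_pmf snd \<mu>)"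
  define \<Phi> where "\<Phi> = (\<lambda>Z::nat \<Rightarrow> (nat \<Rightarrow> 'a) \<times> (nat \<Rightarrow> 'b). \<Prod>j<k. F (row L (\<lambda>i. fst (Z i)) j) * G (row L (\<lambda>i. snd (Z i)) j))"
  define p where "p t = (\<lambda>i::nat. if i < t then \<pi> else \<mu>)" for t :: nat
  define H where "H t = measure_pmf.expectation (Pi_pmf {..<L} undefined (p t)) \<Phi>" for t
  have H0: "H 0 = measure_pmf.expectation (prod_pmf L \<mu>) \<Phi>"
    by (simp add: H_def p_def prod_pmf_def)
  have HL: "H L = measure_pmf.expectation (prod_pmf L (map_pmf fst \<mu>)) (\<lambda>X. \<Prod>j<k. F (row L X j))
              * measure_pmf.expectation (prod_pmf L (map_pmf snd \<mu>)) (\<lambda>Y. \<Prod>j<k. G (row L Y j))"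
  proof -
    have "Pi_pmf {..<L} undefined (p L) = Pi_pmf {..<L} undefined (\<lambda>i. pair_pmf (map_pmf fst \<mu>) (map_pmf snd \<mu>))"
      by (rule Pi_pmf_cong) (auto simp: p_def \<pi>_def)
    also have "\<dots> = map_pmf (\<lambda>(u,v) i. if i \<in> {..<L} then (u i, v i) else undefined)
        (pair_pmf (prod_pmf L (map_pmf fst \<mu>)) (prod_pmf L (map_pmf snd \<mu>)))"
      unfolding prod_pmf_def by (rule Pi_pair) simp
    finally have e: "Pi_pmf {..<L} undefined (p L) = \<dots>" .
    have r: "\<Phi> ((\<lambda>(u,v) i. if i \<in> {..<L} then (u i, v i) else undefined) w)
        = (\<lambda>(u,v). (\<Prod>j<k. F (row L u j)) * (\<Prod>j<k. G (row L v j))) w" for w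
      by (cases w) (simp add: \<Phi>_def row_def restrict_def prod.distrib cong: if_cong)
    have "H L = measure_pmf.expectation (pair_pmf (prod_pmf L (map_pmf fst \<mu>)) (prod_pmf L (map_pmf snd \<mu>)))
           (\<lambda>(u,v). (\<Prod>j<k. F (row L u j)) * (\<Prod>j<k. G (row L v j)))"
      unfolding H_def e integral_map_pmf r ..
    also have "\<dots> = measure_pmf.expectation (prod_pmf L (map_pmf fst \<mu>)) (\<lambda>X. \<Prod>j<k. F (row L X j))
              * measure_pmf.expectation (prod_pmf L (map_pmf snd \<mu>)) (\<lambda>Y. \<Prod>j<k. G (row L Y j))"
      by (rule pmf_int_pair_prod[where B=1 and B'=1]) (auto simp: abs_prod intro!: prod_le_1 bF bG)
    finally show ?thesis .
  qed
  have step: "\<bar>H t - H (Suc t)\<bar> \<le> 2 * l * real k^4 * (influence \<nu>1 L F t * influence \<nu>2 L G t)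
        + real k^2 * (influence \<nu>1 L F t + influence \<nu>2 L G t) / l" if t: "t < L" for t
  proof -
    have a: "p t = (p t)(t := \<mu>)" by (auto simp: p_def fun_eq_iff)
    have b: "p (Suc t) = (p t)(t := \<pi>)" by (auto simp: p_def fun_eq_iff)
    have q: "p t i = \<mu> \<or> p t i = pair_pmf (map_pmf fst \<mu>) (map_pmf snd \<mu>)" for i
      by (auto simp: p_def \<pi>_def)
    show ?thesis
      unfolding H_def \<Phi>_def
      apply (subst a)
      apply (subst b)
      unfolding \<pi>_def
      by (rule hyb_step[OF pw\<mu> bF bG l t q])
  qed
  have "H 0 - H L = (\<Sum>t<L. H t - H (Suc t))" by (simp add: sum_lessThan_telescope')
  then have "\<bar>H 0 - H L\<bar> \<le> (\<Sum>t<L. \<bar>H t - H (Suc t)\<bar>)" by (simp add: sum_abs)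
  also have "\<dots> \<le> (\<Sum>t<L. 2 * l * real k^4 * (influence \<nu>1 L F t * influence \<nu>2 L G t)
        + real k^2 * (influence \<nu>1 L F t + influence \<nu>2 L G t) / l)"
    by (rule sum_mono) (rule step, simp)
  also have "\<dots> = 2 * l * real k^4 * (\<Sum>t<L. influence \<nu>1 L F t * influence \<nu>2 L G t)
        + real k^2 * ((\<Sum>t<L. influence \<nu>1 L F t) + (\<Sum>t<L. influence \<nu>2 L G t)) / l"
    by (simp add: sum.distrib sum_distrib_left distrib_left add_divide_distrib flip: sum_divide_distrib)
  finally show ?thesis unfolding H0 HL \<Phi>_def .
qed

lemma opt_l:
  fixes a b x :: real
  assumes a: "a \<ge> 0" and b: "b \<ge> 0" and h: "\<And>l. l > 0 \<Longrightarrow> x \<le> l * a + b / l"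
  shows "x \<le> 2 * sqrt (a * b)"
proof (cases "a > 0 \<and> b > 0")
  case True
  define l where "l = sqrt b / sqrt a"
  have lpos: "l > 0" using True by (simp add: l_def)
  have sa: "sqrt a * sqrt a = a" "sqrt b * sqrt b = b" using True by simp_all
  have "l * a = sqrt b * sqrt a" unfolding l_def using True
    by (metis sa(1) nonzero_mult_div_cancel_left real_sqrt_gt_0_iff less_irrefl times_divide_eq_left mult.commute)
  moreover have "b / l = sqrt b * sqrt a" unfolding l_def using True
    by (metis sa(2) divide_divide_eq_right nonzero_mult_div_cancel_left real_sqrt_gt_0_iff less_irrefl mult.commute)
  ultimately show ?thesis using h[OF lpos] by (simp add: real_sqrt_mult mult.commute)
next
  case False
  then have ab: "a = 0 \<or> b = 0" using a b by linarith
  show ?thesis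
  proof (rule ccontr)
    assume "\<not> ?thesis"
    then have xpos: "x > 0" using ab by auto
    show False
    proof (cases "a = 0")
      case True
      define l where "l = 2 * b / x + 1"
      have "0 \<le> 2 * b / x" using b xpos by simp
      then have lpos: "l > 0" by (simp add: l_def)
      have "x * l = 2 * b + x" using xpos by (simp add: l_def field_simps)
      then have "b < x * l" using b xpos by linarith
      then have "b / l < x" using lpos by (simp add: divide_less_eq)
      then show False using h[OF lpos] True by simp
    next
      case False
      then have b0: "b = 0" and apos: "a > 0" using ab a by auto
      define l where "l = x / (2 * a)"
      have lpos: "l > 0" using apos xpos by (simp add: l_def)
      have "l * a = x / 2" using apos by (simp add: l_def)
      then show False using h[OF lpos] b0 xpos by simp
    qed
  qed
qed

lemma pow_bound_nat: "4 * k^3 \<le> (2::nat) ^ (5 * k)"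
proof (cases "k = 0")
  case True then show ?thesis by simp
next
  case False
  have "k^3 \<le> (2^k)^3" by (rule power_mono) (auto intro: less_imp_le less_exp)
  also have "\<dots> = 2^(3*k)" by (simp add: power_mult mult.commute)
  finally have a: "4 * k^3 \<le> 4 * 2^(3*k)" by simp
  have "(4::nat) = 2^2" by simp
  also have "\<dots> \<le> 2^(2*k)" using False by (intro power_increasing) auto
  finally have "4 * 2^(3*k) \<le> 2^(2*k) * (2::nat)^(3*k)" by simp
  also have "\<dots> = 2^(5*k)" by (simp flip: power_add)
  finally show ?thesis using a by linarith
qed

lemma pow_bound: "4 * real k^3 \<le> 2 powr (5 * real k)"
proof -
  have "4 * real k^3 = real (4 * k^3)" by simp
  also have "\<dots> \<le> real ((2::nat)^(5*k))" using pow_bound_nat of_nat_le_iff by blast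
  also have "\<dots> = 2 powr (5 * real k)" by (simp add: powr_realpow[symmetric])
  finally show ?thesis .
qed

lemma var_cong_set:
  fixes f g :: "'a \<Rightarrow> real"
  assumes "\<And>x. x \<in> set_pmf p \<Longrightarrow> f x = g x"
  shows "measure_pmf.variance p f = measure_pmf.variance p g"
proof -
  have e: "measure_pmf.expectation p f = measure_pmf.expectation p g" by (rule exp_cong_set) (rule assms)
  show ?thesis by (rule exp_cong_set) (simp add: assms e)
qed

lemma influence_nonneg: "influence \<nu> L F i \<ge> 0"
  unfolding influence_def by (intro Bochner_Integration.integral_nonneg) simp

definition clamp :: "real \<Rightarrow> real" where "clamp y = max (-1) (min 1 y)"
lemma clamp_id: "\<bar>y\<bar> \<le> 1 \<Longrightarrow> clamp y = y" unfolding clamp_def by auto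
lemma clamp_bd: "\<bar>clamp y\<bar> \<le> 1" unfolding clamp_def by auto

lemma final:
  fixes \<Omega>1 \<Omega>2 :: "nat set" and k L :: nat
    and \<mu> :: "((nat \<Rightarrow> nat) \<times> (nat \<Rightarrow> nat)) pmf" and \<nu>1 \<nu>2 :: "nat pmf"
    and F G :: "(nat \<Rightarrow> nat) \<Rightarrow> real"
  assumes supp: "set_pmf \<mu> \<subseteq> (PiE {..<k} (\<lambda>_. \<Omega>1)) \<times> (PiE {..<k} (\<lambda>_. \<Omega>2))"
    and pw: "\<forall>j1<k. \<forall>j2<k.
          map_pmf (\<lambda>(x, y). (x j1, y j2)) \<mu> =
          pair_pmf (map_pmf (\<lambda>(x, y). x j1) \<mu>) (map_pmf (\<lambda>(x, y). y j2) \<mu>)"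
    and m1: "\<forall>j<k. map_pmf (\<lambda>(x, y). x j) \<mu> = \<nu>1"
    and m2: "\<forall>j<k. map_pmf (\<lambda>(x, y). y j) \<mu> = \<nu>2"
    and bF: "\<forall>x \<in> PiE {..<L} (\<lambda>_. \<Omega>1). \<bar>F x\<bar> \<le> 1"
    and bG: "\<forall>y \<in> PiE {..<L} (\<lambda>_. \<Omega>2). \<bar>G y\<bar> \<le> 1"
  shows "\<bar>measure_pmf.expectation (prod_pmf L \<mu>)
               (\<lambda>Z. \<Prod>j<k. F (row L (\<lambda>i. fst (Z i)) j) * G (row L (\<lambda>i. snd (Z i)) j))
            - measure_pmf.expectation (prod_pmf L (map_pmf fst \<mu>))
               (\<lambda>X. \<Prod>j<k. F (row L X j))
              * measure_pmf.expectation (prod_pmf L (map_pmf snd \<mu>))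
               (\<lambda>Y. \<Prod>j<k. G (row L Y j))\<bar>
          \<le> 2 powr (5 * real k) * max (sqrt (\<Sum>i<L. influence \<nu>1 L F i)) (sqrt (\<Sum>i<L. influence \<nu>2 L G i))
             * sqrt (\<Sum>i<L. influence \<nu>1 L F i * influence \<nu>2 L G i)"
proof -
  define SFG where "SFG = (\<Sum>i<L. influence \<nu>1 L F i * influence \<nu>2 L G i)"
  define SF where "SF = (\<Sum>i<L. influence \<nu>1 L F i)"
  define SG where "SG = (\<Sum>i<L. influence \<nu>2 L G i)"
  define \<Gamma> where "\<Gamma> = max (sqrt SF) (sqrt SG)"
  define \<tau> where "\<tau> = sqrt SFG"
  define LHS where "LHS = \<bar>measure_pmf.expectation (prod_pmf L \<mu>)
               (\<lambda>Z. \<Prod>j<k. F (row L (\<lambda>i. fst (Z i)) j) * G (row L (\<lambda>i. snd (Z i)) j))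
            - measure_pmf.expectation (prod_pmf L (map_pmf fst \<mu>))
               (\<lambda>X. \<Prod>j<k. F (row L X j))
              * measure_pmf.expectation (prod_pmf L (map_pmf snd \<mu>))
               (\<lambda>Y. \<Prod>j<k. G (row L Y j))\<bar>"
  have SFG0: "SFG \<ge> 0" unfolding SFG_def by (intro sum_nonneg mult_nonneg_nonneg influence_nonneg)
  have SF0: "SF \<ge> 0" unfolding SF_def by (intro sum_nonneg influence_nonneg)
  have SG0: "SG \<ge> 0" unfolding SG_def by (intro sum_nonneg influence_nonneg)
  have \<Gamma>0: "\<Gamma> \<ge> 0" unfolding \<Gamma>_def using SF0 by (simp add: le_max_iff_disj)
  have \<tau>0: "\<tau> \<ge> 0" unfolding \<tau>_def using SFG0 by simp
  have goal: "LHS \<le> 2 powr (5 * real k) * \<Gamma> * \<tau>"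
  proof (cases "k = 0")
    case True
    then have "LHS = 0" unfolding LHS_def by simp
    then show ?thesis using \<Gamma>0 \<tau>0 by simp
  next
    case False
    then have k0: "0 < k" by simp
    have set\<nu>1: "set_pmf \<nu>1 \<subseteq> \<Omega>1"
    proof
      fix a assume "a \<in> set_pmf \<nu>1"
      then have "a \<in> set_pmf (map_pmf (\<lambda>(x, y). x 0) \<mu>)" using m1 k0 by auto
      then obtain x y where "(x,y) \<in> set_pmf \<mu>" "a = x 0" by auto
      then show "a \<in> \<Omega>1" using supp k0 by (auto simp: PiE_def Pi_def)
    qed
    have set\<nu>2: "set_pmf \<nu>2 \<subseteq> \<Omega>2"
    proof
      fix a assume "a \<in> set_pmf \<nu>2"
      then have "a \<in> set_pmf (map_pmf (\<lambda>(x, y). y 0) \<mu>)" using m2 k0 by auto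
      then obtain x y where "(x,y) \<in> set_pmf \<mu>" "a = y 0" by auto
      then show "a \<in> \<Omega>2" using supp k0 by (auto simp: PiE_def Pi_def)
    qed
    define F' where "F' x = clamp (F x)" for x
    define G' where "G' y = clamp (G y)" for y
    have F'F: "F' x = F x" if "x \<in> PiE {..<L} (\<lambda>_. \<Omega>1)" for x
      unfolding F'_def using bF that by (simp add: clamp_id)
    have G'G: "G' y = G y" if "y \<in> PiE {..<L} (\<lambda>_. \<Omega>2)" for y
      unfolding G'_def using bG that by (simp add: clamp_id)
    have setPi: "set_pmf (prod_pmf L p) = PiE_dflt {..<L} undefined (\<lambda>_. set_pmf p)" for p :: "'z pmf"
      unfolding prod_pmf_def by (simp add: set_Pi_pmf)
    have inflF: "influence \<nu>1 L F' t = influence \<nu>1 L F t" if t: "t < L" for t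
      unfolding influence_def
    proof (rule exp_cong_set, rule var_cong_set)
      fix x a assume x: "x \<in> set_pmf (prod_pmf L \<nu>1)" and a: "a \<in> set_pmf \<nu>1"
      have "x(t := a) \<in> PiE {..<L} (\<lambda>_. \<Omega>1)"
        using x a t set\<nu>1 unfolding setPi by (auto simp: PiE_dflt_def PiE_def Pi_def extensional_def)
      then show "F' (x(t := a)) = F (x(t := a))" by (rule F'F)
    qed
    have inflG: "influence \<nu>2 L G' t = influence \<nu>2 L G t" if t: "t < L" for t
      unfolding influence_def
    proof (rule exp_cong_set, rule var_cong_set)
      fix x a assume x: "x \<in> set_pmf (prod_pmf L \<nu>2)" and a: "a \<in> set_pmf \<nu>2"
      have "x(t := a) \<in> PiE {..<L} (\<lambda>_. \<Omega>2)"
        using x a t set\<nu>2 unfolding setPi by (auto simp: PiE_dflt_def PiE_def Pi_def extensional_def)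
      then show "G' (x(t := a)) = G (x(t := a))" by (rule G'G)
    qed
    have rowX: "row L X j \<in> PiE {..<L} (\<lambda>_. \<Omega>1)"
      if "\<And>i. i < L \<Longrightarrow> X i \<in> PiE {..<k} (\<lambda>_. \<Omega>1)" "j < k" for X j
      using that by (auto simp: row_def PiE_def Pi_def)
    have rowY: "row L Y j \<in> PiE {..<L} (\<lambda>_. \<Omega>2)"
      if "\<And>i. i < L \<Longrightarrow> Y i \<in> PiE {..<k} (\<lambda>_. \<Omega>2)" "j < k" for Y j
      using that by (auto simp: row_def PiE_def Pi_def)
    have EQ1: "measure_pmf.expectation (prod_pmf L \<mu>)
               (\<lambda>Z. \<Prod>j<k. F (row L (\<lambda>i. fst (Z i)) j) * G (row L (\<lambda>i. snd (Z i)) j))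
             = measure_pmf.expectation (prod_pmf L \<mu>)
               (\<lambda>Z. \<Prod>j<k. F' (row L (\<lambda>i. fst (Z i)) j) * G' (row L (\<lambda>i. snd (Z i)) j))"
    proof (rule exp_cong_set, rule prod.cong[OF refl])
      fix Z j assume Z: "Z \<in> set_pmf (prod_pmf L \<mu>)" and j: "j \<in> {..<k}"
      have Zi: "Z i \<in> set_pmf \<mu>" if "i < L" for i using Z that unfolding setPi by (auto simp: PiE_dflt_def)
      have "fst (Z i) \<in> PiE {..<k} (\<lambda>_. \<Omega>1)" "snd (Z i) \<in> PiE {..<k} (\<lambda>_. \<Omega>2)" if "i < L" for i
        using subsetD[OF supp Zi[OF that]] by (simp_all add: mem_Times_iff)
      then show "F (row L (\<lambda>i. fst (Z i)) j) * G (row L (\<lambda>i. snd (Z i)) j) =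
                 F' (row L (\<lambda>i. fst (Z i)) j) * G' (row L (\<lambda>i. snd (Z i)) j)"
        using j by (simp add: F'F G'G rowX rowY)
    qed
    have EQ2: "measure_pmf.expectation (prod_pmf L (map_pmf fst \<mu>)) (\<lambda>X. \<Prod>j<k. F (row L X j))
             = measure_pmf.expectation (prod_pmf L (map_pmf fst \<mu>)) (\<lambda>X. \<Prod>j<k. F' (row L X j))"
    proof (rule exp_cong_set, rule prod.cong[OF refl])
      fix X j assume X: "X \<in> set_pmf (prod_pmf L (map_pmf fst \<mu>))" and j: "j \<in> {..<k}"
      have "X i \<in> PiE {..<k} (\<lambda>_. \<Omega>1)" if "i < L" for i
      proof -
        have "X i \<in> fst ` set_pmf \<mu>" using X that unfolding setPi by (auto simp: PiE_dflt_def)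
        then obtain z where z: "z \<in> set_pmf \<mu>" "X i = fst z" by auto
        show ?thesis using subsetD[OF supp z(1)] z(2) by (simp add: mem_Times_iff)
      qed
      then show "F (row L X j) = F' (row L X j)" using j by (simp add: F'F rowX)
    qed
    have EQ3: "measure_pmf.expectation (prod_pmf L (map_pmf snd \<mu>)) (\<lambda>Y. \<Prod>j<k. G (row L Y j))
             = measure_pmf.expectation (prod_pmf L (map_pmf snd \<mu>)) (\<lambda>Y. \<Prod>j<k. G' (row L Y j))"
    proof (rule exp_cong_set, rule prod.cong[OF refl])
      fix Y j assume Y: "Y \<in> set_pmf (prod_pmf L (map_pmf snd \<mu>))" and j: "j \<in> {..<k}"
      have "Y i \<in> PiE {..<k} (\<lambda>_. \<Omega>2)" if "i < L" for i
      proof -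
        have "Y i \<in> snd ` set_pmf \<mu>" using Y that unfolding setPi by (auto simp: PiE_dflt_def)
        then obtain z where z: "z \<in> set_pmf \<mu>" "Y i = snd z" by auto
        show ?thesis using subsetD[OF supp z(1)] z(2) by (simp add: mem_Times_iff)
      qed
      then show "G (row L Y j) = G' (row L Y j)" using j by (simp add: G'G rowY)
    qed
    have pw\<mu>: "map_pmf (\<lambda>c. (fst c j1, snd c j2)) \<mu> = pair_pmf \<nu>1 \<nu>2" if "j1 < k" "j2 < k" for j1 j2
      using pw m1 m2 that by (simp add: case_prod_unfold)
    have sums: "(\<Sum>t<L. influence \<nu>1 L F' t * influence \<nu>2 L G' t) = SFG"
               "(\<Sum>t<L. influence \<nu>1 L F' t) = SF" "(\<Sum>t<L. influence \<nu>2 L G' t) = SG"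
      unfolding SFG_def SF_def SG_def by (auto intro!: sum.cong simp: inflF inflG)
    have main: "LHS \<le> l * (2 * real k^4 * SFG) + real k^2 * (SF + SG) / l" if l: "l > 0" for l
    proof -
      have "LHS \<le> 2 * l * real k^4 * SFG + real k^2 * (SF + SG) / l"
        unfolding LHS_def EQ1 EQ2 EQ3 sums[symmetric]
        by (rule main_bounded[OF pw\<mu> _ _ l]) (auto simp: F'_def G'_def clamp_bd)
      then show ?thesis by (simp add: mult_ac)
    qed
    have a0: "2 * real k^4 * SFG \<ge> 0" using SFG0 by simp
    have b0: "real k^2 * (SF + SG) \<ge> 0" using SF0 SG0 by simp
    have "LHS \<le> 2 * sqrt ((2 * real k^4 * SFG) * (real k^2 * (SF + SG)))"
      by (rule opt_l[OF a0 b0 main])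
    also have "\<dots> \<le> 2 * (2 * real k^3 * \<tau> * \<Gamma>)"
    proof -
      have SFl: "SF \<le> \<Gamma>^2"
      proof -
        have "sqrt SF \<le> \<Gamma>" unfolding \<Gamma>_def by simp
        then have "(sqrt SF)^2 \<le> \<Gamma>^2" using SF0 by (intro power_mono) auto
        then show ?thesis using SF0 by simp
      qed
      have SGl: "SG \<le> \<Gamma>^2"
      proof -
        have "sqrt SG \<le> \<Gamma>" unfolding \<Gamma>_def by simp
        then have "(sqrt SG)^2 \<le> \<Gamma>^2" using SG0 by (intro power_mono) auto
        then show ?thesis using SG0 by simp
      qed
      have t2: "\<tau>^2 = SFG" unfolding \<tau>_def using SFG0 by simp
      have "(2 * real k^4 * SFG) * (real k^2 * (SF + SG)) \<le> (2 * real k^4 * SFG) * (real k^2 * (2 * \<Gamma>^2))"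
        using SFl SGl a0 by (intro mult_left_mono) auto
      also have "\<dots> = (2 * real k^3 * \<tau> * \<Gamma>)^2"
        by (simp add: t2[symmetric] power_mult_distrib power2_eq_square power3_eq_cube power4_eq_xxxx)
      finally have "sqrt ((2 * real k^4 * SFG) * (real k^2 * (SF + SG))) \<le> sqrt ((2 * real k^3 * \<tau> * \<Gamma>)^2)"
        by (rule real_sqrt_le_mono)
      also have "\<dots> = 2 * real k^3 * \<tau> * \<Gamma>" using \<tau>0 \<Gamma>0 by simp
      finally show ?thesis by (simp add: mult_ac)
    qed
    also have "\<dots> = (4 * real k^3) * (\<Gamma> * \<tau>)" by simp
    also have "\<dots> \<le> 2 powr (5 * real k) * (\<Gamma> * \<tau>)"
      by (rule mult_right_mono[OF pow_bound]) (use \<Gamma>0 \<tau>0 in simp)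
    finally show ?thesis by (simp add: mult.assoc)
  qed
  then show ?thesis unfolding LHS_def \<Gamma>_def \<tau>_def SF_def SG_def SFG_def .
qed

theorem theorem2p8:
  "\<exists>C::real. C > 0 \<and>
    (\<forall>(\<Omega>1::nat set) (\<Omega>2::nat set) (k::nat) (L::nat)
        (\<mu> :: ((nat \<Rightarrow> nat) \<times> (nat \<Rightarrow> nat)) pmf) (\<nu>1::nat pmf) (\<nu>2::nat pmf)
        (F :: (nat \<Rightarrow> nat) \<Rightarrow> real) (G :: (nat \<Rightarrow> nat) \<Rightarrow> real).
      finite \<Omega>1 \<longrightarrow> finite \<Omega>2 \<longrightarrow>
      set_pmf \<mu> \<subseteq> (PiE {..<k} (\<lambda>_. \<Omega>1)) \<times> (PiE {..<k} (\<lambda>_. \<Omega>2)) \<longrightarrow>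
      (\<forall>j1<k. \<forall>j2<k.
          map_pmf (\<lambda>(x, y). (x j1, y j2)) \<mu> =
          pair_pmf (map_pmf (\<lambda>(x, y). x j1) \<mu>) (map_pmf (\<lambda>(x, y). y j2) \<mu>)) \<longrightarrow>
      (\<forall>j<k. map_pmf (\<lambda>(x, y). x j) \<mu> = \<nu>1) \<longrightarrow>
      (\<forall>j<k. map_pmf (\<lambda>(x, y). y j) \<mu> = \<nu>2) \<longrightarrow>
      (\<forall>x \<in> PiE {..<L} (\<lambda>_. \<Omega>1). \<bar>F x\<bar> \<le> 1) \<longrightarrow>
      (\<forall>y \<in> PiE {..<L} (\<lambda>_. \<Omega>2). \<bar>G y\<bar> \<le> 1) \<longrightarrow>
      (let \<tau> = sqrt (\<Sum>i<L. influence \<nu>1 L F i * influence \<nu>2 L G i);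
           \<Gamma> = max (sqrt (\<Sum>i<L. influence \<nu>1 L F i)) (sqrt (\<Sum>i<L. influence \<nu>2 L G i))
       in \<bar>measure_pmf.expectation (prod_pmf L \<mu>)
               (\<lambda>Z. \<Prod>j<k. F (row L (\<lambda>i. fst (Z i)) j) * G (row L (\<lambda>i. snd (Z i)) j))
            - measure_pmf.expectation (prod_pmf L (map_pmf fst \<mu>))
               (\<lambda>X. \<Prod>j<k. F (row L X j))
              * measure_pmf.expectation (prod_pmf L (map_pmf snd \<mu>))
               (\<lambda>Y. \<Prod>j<k. G (row L Y j))\<bar>
          \<le> 2 powr (C * real k) * \<Gamma> * \<tau>))"
    apply (rule exI[where x=5])
  apply (intro conjI allI impI)
   apply simp
  apply (unfold Let_def)
  apply (rule final; assumption)
  done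

end
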